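(* Let $X\in\mathbb{R}^{n\times p}$, $\mathbf y\in\mathbb{R}^n$, $\mathbf y\neq\mathbf 0$, $0<\lambda_1\le\|X^T\mathbf y\|_\infty$, $0<\lambda_2<\lambda_1$, and $\mathbf x\in\mathbb{R}^n$ with $\mathbf x\neq\mathbf 0$. Let $\mathbf a=\frac{\mathbf y}{\lambda_1}-\boldsymbol\theta_1^*$ and $\mathbf b=\frac{\mathbf y}{\lambda_2}-\boldsymbol\theta_1^*$. Consider the optimization problem $$\min_{\mathbf r\in\mathbb{R}^n}\ \langle\mathbf x,\mathbf r\rangle\quad\text{subject to}\quad \langle\mathbf a,\mathbf r+\mathbf b\rangle\le 0,\ \ \|\mathbf r\|_2^2\le\|\mathbf b\|_2^2.$$ Its optimal value equals $-\|\mathbf x\|_2\|\mathbf b\|_2$ if $\frac{\langle\mathbf b,\mathbf a\rangle}{\|\mathbf b\|_2}\le\frac{\langle\mathbf x,\mathbf a\rangle}{\|\mathbf x\|_2}$, and otherwise (in which case $\mathbf a\ne\mathbf 0$) it equals $$-\|\mathbf x^\perp\|_2\sqrt{\|\mathbf b\|_2^2-\frac{\langle\mathbf b,\mathbf a\rangle^2}{\|\mathbf a\|_2^2}}-\frac{\langle\mathbf a,\mathbf b\rangle\langle\mathbf x,\mathbf a\rangle}{\|\mathbf a\|_2^2},$$ where $\mathbf x^\perp=\mathbf x-\mathbf a\frac{\langle\mathbf x,\mathbf a\rangle}{\|\mathbf a\|_2^2}$.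
   Context: $X\in\mathbb{R}^{n\times p}$ is a matrix and $\mathbf y\in\mathbb{R}^n$ a vector. Let $F=\{\boldsymbol\theta\in\mathbb{R}^n:\|X^T\boldsymbol\theta\|_\infty\le 1\}$. For $\lambda>0$, the Lasso dual optimum $\boldsymbol\theta^*(\lambda)$ is the unique minimizer of $\frac12\|\boldsymbol\theta-\mathbf y/\lambda\|_2^2$ over $\boldsymbol\theta\in F$, i.e. the Euclidean projection of $\mathbf y/\lambda$ onto $F$. Write $\boldsymbol\theta_1^*=\boldsymbol\theta^*(\lambda_1)$. *)

theory Defs
  imports "HOL-Analysis.Analysis"
begin

definition dual_feasible :: "real^'p^'n \<Rightarrow> (real^'n) set" where
  "dual_feasible X = {\<theta>. infnorm (transpose X *v \<theta>) \<le> 1}"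

definition lasso_dual :: "real^'p^'n \<Rightarrow> real^'n \<Rightarrow> real \<Rightarrow> real^'n" where
  "lasso_dual X y lam = (THE \<theta>. \<theta> \<in> dual_feasible X \<and>
      (\<forall>\<eta>\<in>dual_feasible X. (1/2) * (norm (\<theta> - (1/lam) *\<^sub>R y))\<^sup>2
                              \<le> (1/2) * (norm (\<eta> - (1/lam) *\<^sub>R y))\<^sup>2))"

end

theory Submission
  imports Defs
begin

lemma scal_K:
  fixes \<xi> p c q :: real
  assumes p: "p \<ge> 0" and q: "q > 0"
    and H: "c * sqrt (\<xi>\<^sup>2 + p\<^sup>2) + \<xi> * sqrt (c\<^sup>2 + q\<^sup>2) < 0"
  shows "\<xi> * q + p * c \<le> 0"
proof -
  define N where "N = sqrt (\<xi>\<^sup>2 + p\<^sup>2)"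
  define B where "B = sqrt (c\<^sup>2 + q\<^sup>2)"
  have N0: "N \<ge> 0" and B0: "B \<ge> 0" unfolding N_def B_def by auto
  have N2: "N\<^sup>2 = \<xi>\<^sup>2 + p\<^sup>2" unfolding N_def by simp
  have B2: "B\<^sup>2 = c\<^sup>2 + q\<^sup>2" unfolding B_def by simp
  have H': "c * N + \<xi> * B < 0" using H unfolding N_def B_def .
  show ?thesis
  proof (cases "\<xi> \<ge> 0")
    case True
    have "\<xi> * B \<ge> 0" using True B0 by simp
    hence lt: "\<xi> * B < - c * N" using H' by linarith
    have "(\<xi> * B)\<^sup>2 < (- c * N)\<^sup>2"
      using lt \<open>\<xi> * B \<ge> 0\<close> by (intro power_strict_mono) auto
    hence "\<xi>\<^sup>2 * (c\<^sup>2 + q\<^sup>2) < c\<^sup>2 * (\<xi>\<^sup>2 + p\<^sup>2)"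
      by (simp add: power_mult_distrib B2 N2)
    hence "(\<xi> * q)\<^sup>2 < (- c * p)\<^sup>2" by (simp add: power_mult_distrib algebra_simps)
    moreover have "- c * N > 0" using lt \<open>\<xi> * B \<ge> 0\<close> by linarith
    hence "c < 0" using N0 mult_nonneg_nonneg[of c N] by linarith
    hence "- c * p \<ge> 0" using p mult_nonneg_nonneg[of "-c" p] by linarith
    ultimately have "\<xi> * q \<le> - c * p"
      using power2_le_imp_le[of "\<xi> * q" "- c * p"] by linarith
    thus ?thesis by (simp add: algebra_simps)
  next
    case False
    show ?thesis
    proof (cases "c \<le> 0")
      case True
      have "\<xi> * q \<le> 0" using False q mult_nonpos_nonneg[of \<xi> q] by linarith
      moreover have "p * c \<le> 0" using True p by (simp add: mult_nonneg_nonpos)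
      ultimately show ?thesis by linarith
    next
      case c: False
      have "c * N \<ge> 0" using c N0 by simp
      hence lt: "c * N < - \<xi> * B" using H' by linarith
      have "(c * N)\<^sup>2 < (- \<xi> * B)\<^sup>2"
        using lt \<open>c * N \<ge> 0\<close> by (intro power_strict_mono) auto
      hence "c\<^sup>2 * (\<xi>\<^sup>2 + p\<^sup>2) < \<xi>\<^sup>2 * (c\<^sup>2 + q\<^sup>2)"
        by (simp add: power_mult_distrib B2 N2)
      hence "(c * p)\<^sup>2 < (- \<xi> * q)\<^sup>2" by (simp add: power_mult_distrib algebra_simps)
      moreover have "- \<xi> * q \<ge> 0" using False q mult_nonneg_nonneg[of "-\<xi>" q] by linarith
      ultimately have "c * p \<le> - \<xi> * q"
        using power2_le_imp_le[of "c * p" "- \<xi> * q"] by linarith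
      thus ?thesis using mult.commute[of p c] by linarith
    qed
  qed
qed

lemma scal:
  fixes \<xi> p c q t \<sigma> :: real
  assumes p: "p \<ge> 0" and q: "q \<ge> 0" and s: "\<sigma> \<ge> 0" and tc: "t \<le> c"
    and tb: "t\<^sup>2 + \<sigma>\<^sup>2 \<le> c\<^sup>2 + q\<^sup>2"
    and H: "c * sqrt (\<xi>\<^sup>2 + p\<^sup>2) + \<xi> * sqrt (c\<^sup>2 + q\<^sup>2) < 0"
  shows "t * \<xi> - p * \<sigma> \<ge> c * \<xi> - p * q"
proof (cases "q = 0")
  case True
  show ?thesis
  proof (cases "c \<ge> 0")
    case c: True
    have "sqrt (\<xi>\<^sup>2 + p\<^sup>2) \<ge> sqrt (\<xi>\<^sup>2)" by (simp add: real_sqrt_le_mono)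
    hence "sqrt (\<xi>\<^sup>2 + p\<^sup>2) + \<xi> \<ge> 0" using real_sqrt_abs[of \<xi>] by linarith
    hence "c * (sqrt (\<xi>\<^sup>2 + p\<^sup>2) + \<xi>) \<ge> 0" using c by simp
    moreover have "sqrt (c\<^sup>2 + q\<^sup>2) = c" using True c by simp
    ultimately show ?thesis using H by (simp add: algebra_simps)
  next
    case c: False
    have "t\<^sup>2 + \<sigma>\<^sup>2 \<le> c\<^sup>2" using tb True by simp
    hence "t\<^sup>2 \<le> c\<^sup>2" using zero_le_power2[of \<sigma>] by linarith
    hence "\<bar>t\<bar> \<le> \<bar>c\<bar>" by (simp add: abs_le_square_iff)
    hence "t = c" using c tc by linarith
    hence "\<sigma>\<^sup>2 \<le> 0" using tb True by simp
    hence "\<sigma> = 0" using s by simp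
    thus ?thesis using \<open>t = c\<close> \<open>q = 0\<close> by simp
  qed
next
  case False
  hence q: "q > 0" using q by simp
  have K: "\<xi> * q + p * c \<le> 0" using scal_K[OF p q H] .
  have A: "c * t + q * \<sigma> \<le> c\<^sup>2 + q\<^sup>2"
  proof -
    have "0 \<le> (c - t)\<^sup>2 + (q - \<sigma>)\<^sup>2" by simp
    thus ?thesis using tb by (simp add: power2_diff algebra_simps)
  qed
  have EQ: "q * (t * \<xi> - p * \<sigma>) - q * (c * \<xi> - p * q) = (q * \<xi>) * (t - c) + p * (q * q - q * \<sigma>)"
    by (simp add: algebra_simps)
  have "(q * \<xi>) * (t - c) \<ge> (- p * c) * (t - c)"
  proof -
    have "q * \<xi> \<le> - p * c" using K by (simp add: mult.commute)
    thus ?thesis using mult_right_mono_neg[of "q * \<xi>" "- p * c" "t - c"] tc by linarith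
  qed
  hence "(q * \<xi>) * (t - c) + p * (q * q - q * \<sigma>) \<ge> p * (c\<^sup>2 + q\<^sup>2 - c * t - q * \<sigma>)"
    by (simp add: algebra_simps power2_eq_square)
  moreover have "p * (c\<^sup>2 + q\<^sup>2 - c * t - q * \<sigma>) \<ge> 0" using A p by simp
  ultimately have "q * (t * \<xi> - p * \<sigma>) - q * (c * \<xi> - p * q) \<ge> 0" using EQ by linarith
  hence "q * ((t * \<xi> - p * \<sigma>) - (c * \<xi> - p * q)) \<ge> 0" by (simp add: algebra_simps)
  thus ?thesis using q by (simp add: zero_le_mult_iff)
qed

lemma geo1:
  fixes a b x :: "'a::real_inner"
  assumes x0: "x \<noteq> 0" and C: "b \<bullet> a / norm b \<le> x \<bullet> a / norm x"
  shows "Inf {x \<bullet> r | r. a \<bullet> (r + b) \<le> 0 \<and> (norm r)\<^sup>2 \<le> (norm b)\<^sup>2} = - norm x * norm b"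
proof (rule cInf_eq_minimum)
  have nx: "norm x > 0" using x0 by simp
  define r1 where "r1 = - (norm b / norm x) *\<^sub>R x"
  have "x \<bullet> r1 = - (norm b / norm x) * (x \<bullet> x)" unfolding r1_def by simp
  also have "x \<bullet> x = (norm x)\<^sup>2" by (simp add: power2_norm_eq_inner)
  finally have e1: "x \<bullet> r1 = - norm x * norm b" using nx by (simp add: power2_eq_square)
  have n1: "norm r1 = norm b" unfolding r1_def using nx by simp
  have "a \<bullet> (r1 + b) \<le> 0"
  proof (cases "b = 0")
    case True thus ?thesis unfolding r1_def by simp
  next
    case False
    hence nb: "norm b > 0" by simp
    have "b \<bullet> a \<le> norm b * (x \<bullet> a / norm x)"
      using C nb by (simp add: divide_le_eq mult.commute)
    thus ?thesis unfolding r1_def by (simp add: inner_add_right inner_commute algebra_simps)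
  qed
  thus "- norm x * norm b \<in> {x \<bullet> r | r. a \<bullet> (r + b) \<le> 0 \<and> (norm r)\<^sup>2 \<le> (norm b)\<^sup>2}"
    using e1 n1 by (intro CollectI exI[of _ r1]) auto
next
  fix z assume "z \<in> {x \<bullet> r | r. a \<bullet> (r + b) \<le> 0 \<and> (norm r)\<^sup>2 \<le> (norm b)\<^sup>2}"
  then obtain r where z: "z = x \<bullet> r" and r: "(norm r)\<^sup>2 \<le> (norm b)\<^sup>2" by auto
  have nr: "norm r \<le> norm b" by (rule power2_le_imp_le[OF r norm_ge_zero])
  have "\<bar>x \<bullet> r\<bar> \<le> norm x * norm r" by (rule Cauchy_Schwarz_ineq2)
  moreover have "norm x * norm r \<le> norm x * norm b" using nr by (simp add: mult_left_mono)
  ultimately show "- norm x * norm b \<le> z" unfolding z by linarith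
qed


lemma geo2:
  fixes a b x :: "'a::real_inner"
  assumes x0: "x \<noteq> 0" and C: "\<not> (b \<bullet> a / norm b \<le> x \<bullet> a / norm x)"
  shows "a \<noteq> 0 \<and> Inf {x \<bullet> r | r. a \<bullet> (r + b) \<le> 0 \<and> (norm r)\<^sup>2 \<le> (norm b)\<^sup>2}
     = - norm (x - ((x \<bullet> a) / (norm a)\<^sup>2) *\<^sub>R a) * sqrt ((norm b)\<^sup>2 - (b \<bullet> a)\<^sup>2 / (norm a)\<^sup>2)
                  - (a \<bullet> b) * (x \<bullet> a) / (norm a)\<^sup>2"
proof
  show a0: "a \<noteq> 0" using C by auto
  define S where "S = {x \<bullet> r | r. a \<bullet> (r + b) \<le> 0 \<and> (norm r)\<^sup>2 \<le> (norm b)\<^sup>2}"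
  define xp where "xp = x - ((x \<bullet> a) / (norm a)\<^sup>2) *\<^sub>R a"
  show "Inf {x \<bullet> r | r. a \<bullet> (r + b) \<le> 0 \<and> (norm r)\<^sup>2 \<le> (norm b)\<^sup>2}
     = - norm (x - ((x \<bullet> a) / (norm a)\<^sup>2) *\<^sub>R a) * sqrt ((norm b)\<^sup>2 - (b \<bullet> a)\<^sup>2 / (norm a)\<^sup>2)
                  - (a \<bullet> b) * (x \<bullet> a) / (norm a)\<^sup>2"
  proof (cases "b = 0")
    case True
    have "S = {0}"
    proof
      show "S \<subseteq> {0}" unfolding S_def using True by auto
      show "{0} \<subseteq> S" unfolding S_def using True by (auto intro!: exI[of _ 0])
    qed
    thus ?thesis using True unfolding S_def by simp
  next
    case False
    define na where "na = norm a"
    have na: "na > 0" using a0 unfolding na_def by simp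
    have aa: "a \<bullet> a = na\<^sup>2" unfolding na_def by (simp add: power2_norm_eq_inner)
    have nb: "norm b > 0" using False by simp
    have nx: "norm x > 0" using x0 by simp
    define \<xi> where "\<xi> = (x \<bullet> a) / na"
    define c where "c = - (a \<bullet> b) / na"
    define p where "p = norm xp"
    define q where "q = sqrt ((norm b)\<^sup>2 - (b \<bullet> a)\<^sup>2 / na\<^sup>2)"
    have axp: "a \<bullet> xp = 0" unfolding xp_def using na aa
      by (simp add: inner_diff_right inner_commute na_def)
    have xxp: "x \<bullet> xp = p\<^sup>2"
    proof -
      have "x \<bullet> xp = (xp + ((x \<bullet> a) / na\<^sup>2) *\<^sub>R a) \<bullet> xp" unfolding xp_def na_def by simp
      also have "\<dots> = xp \<bullet> xp"
      proof -
        have xpa: "xp \<bullet> a = 0" using axp by (simp add: inner_commute)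
        show ?thesis using axp by (simp add: inner_add_left inner_add_right xpa)
      qed
      finally show ?thesis unfolding p_def by (simp add: power2_norm_eq_inner)
    qed
    have nx2: "(norm x)\<^sup>2 = \<xi>\<^sup>2 + p\<^sup>2"
    proof -
      have "p\<^sup>2 = xp \<bullet> xp" unfolding p_def by (simp add: power2_norm_eq_inner)
      also have "\<dots> = x \<bullet> x - (x \<bullet> a)\<^sup>2 / na\<^sup>2" unfolding xp_def using na aa
        by (simp add: inner_diff_left inner_diff_right inner_commute na_def power2_eq_square field_simps)
      finally show ?thesis unfolding \<xi>_def using na
        by (simp add: power2_norm_eq_inner power_divide)
    qed
    have CS: "(b \<bullet> a)\<^sup>2 \<le> na\<^sup>2 * (norm b)\<^sup>2"
    proof -
      have "\<bar>b \<bullet> a\<bar> \<le> norm b * na" unfolding na_def by (rule Cauchy_Schwarz_ineq2)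
      hence "\<bar>b \<bullet> a\<bar>\<^sup>2 \<le> (norm b * na)\<^sup>2" by (intro power_mono) auto
      thus ?thesis by (simp add: power_mult_distrib mult.commute)
    qed
    have q2ge: "(norm b)\<^sup>2 - (b \<bullet> a)\<^sup>2 / na\<^sup>2 \<ge> 0"
    proof -
      have "na\<^sup>2 > 0" using na by simp
      hence "(b \<bullet> a)\<^sup>2 / na\<^sup>2 \<le> (norm b)\<^sup>2"
      proof -
        have "(b \<bullet> a)\<^sup>2 \<le> (norm b)\<^sup>2 * na\<^sup>2" using CS by (simp only: mult.commute)
        thus ?thesis using pos_divide_le_eq[OF \<open>na\<^sup>2 > 0\<close>, of "(b \<bullet> a)\<^sup>2" "(norm b)\<^sup>2"] by blast
      qed
      thus ?thesis by simp
    qed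
    have q0: "q \<ge> 0" unfolding q_def by (rule real_sqrt_ge_zero[OF q2ge])
    have q2: "q\<^sup>2 = (norm b)\<^sup>2 - (b \<bullet> a)\<^sup>2 / na\<^sup>2" unfolding q_def by (rule real_sqrt_pow2[OF q2ge])
    have cq: "c\<^sup>2 + q\<^sup>2 = (norm b)\<^sup>2" unfolding c_def q2 using na
      by (simp add: power_divide inner_commute)
    have H: "c * sqrt (\<xi>\<^sup>2 + p\<^sup>2) + \<xi> * sqrt (c\<^sup>2 + q\<^sup>2) < 0"
    proof -
      have "sqrt (\<xi>\<^sup>2 + p\<^sup>2) = norm x" using nx2 by (metis norm_ge_zero real_sqrt_unique)
      moreover have "sqrt (c\<^sup>2 + q\<^sup>2) = norm b" using cq by (metis norm_ge_zero real_sqrt_unique)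
      moreover have "(x \<bullet> a) * norm b < (b \<bullet> a) * norm x"
      proof -
        have "x \<bullet> a / norm x < b \<bullet> a / norm b" using C by simp
        thus ?thesis using nx nb by (simp add: field_simps)
      qed
      hence "c * norm x + \<xi> * norm b < 0" unfolding c_def \<xi>_def using na
        by (simp add: field_simps inner_commute)
      ultimately show ?thesis by simp
    qed
    define val where "val = c * \<xi> - p * q"
    have val_eq: "val = - norm (x - ((x \<bullet> a) / (norm a)\<^sup>2) *\<^sub>R a) * sqrt ((norm b)\<^sup>2 - (b \<bullet> a)\<^sup>2 / (norm a)\<^sup>2)
                  - (a \<bullet> b) * (x \<bullet> a) / (norm a)\<^sup>2"
      unfolding val_def c_def \<xi>_def p_def q_def xp_def na_def using na
      by (simp add: power2_eq_square)
    have "Inf S = val"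
    proof (rule cInf_eq_minimum)
      define r0 where "r0 = (c / na) *\<^sub>R a - (q / p) *\<^sub>R xp"
      have e0: "x \<bullet> r0 = val"
      proof -
        have "x \<bullet> r0 = c * \<xi> - (q / p) * p\<^sup>2" unfolding r0_def \<xi>_def using xxp
          by (simp add: inner_diff_right)
        also have "(q / p) * p\<^sup>2 = p * q" by (simp add: power2_eq_square)
        finally show ?thesis unfolding val_def .
      qed
      have f0: "a \<bullet> (r0 + b) \<le> 0" unfolding r0_def c_def using na aa axp
        by (simp add: inner_add_right inner_diff_right power2_eq_square)
      have "r0 \<bullet> r0 = (c / na) * (c / na) * (a \<bullet> a) - (c / na) * (q / p) * (a \<bullet> xp)
          - (q / p) * (c / na) * (xp \<bullet> a) + (q / p) * (q / p) * (xp \<bullet> xp)" unfolding r0_def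
        by (simp add: inner_diff_left inner_diff_right algebra_simps)
      also have "xp \<bullet> a = 0" using axp by (simp add: inner_commute)
      also have "xp \<bullet> xp = p\<^sup>2" unfolding p_def by (simp add: power2_norm_eq_inner)
      finally have "r0 \<bullet> r0 = (c / na)\<^sup>2 * na\<^sup>2 + (q / p)\<^sup>2 * p\<^sup>2" using aa axp
        by (simp add: power2_eq_square)
      also have "\<dots> \<le> c\<^sup>2 + q\<^sup>2" using na
        by (cases "p = 0") (auto simp: power_divide)
      finally have "(norm r0)\<^sup>2 \<le> (norm b)\<^sup>2" using cq by (simp add: power2_norm_eq_inner)
      thus "val \<in> S" unfolding S_def using e0 f0 by (intro CollectI exI[of _ r0]) auto
    next
      fix z assume "z \<in> S"
      then obtain r where z: "z = x \<bullet> r" and fr: "a \<bullet> (r + b) \<le> 0"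
        and r: "(norm r)\<^sup>2 \<le> (norm b)\<^sup>2" unfolding S_def by auto
      define t where "t = (a \<bullet> r) / na"
      define s where "s = r - ((a \<bullet> r) / na\<^sup>2) *\<^sub>R a"
      have as: "a \<bullet> s = 0" unfolding s_def using na aa by (simp add: inner_diff_right)
      have tc: "t \<le> c"
      proof -
        have "a \<bullet> r \<le> - (a \<bullet> b)" using fr by (simp add: inner_add_right)
        hence "(a \<bullet> r) / na \<le> (- (a \<bullet> b)) / na" using na by (intro divide_right_mono) auto
        thus ?thesis unfolding t_def c_def by simp
      qed
      have ss: "(norm s)\<^sup>2 = r \<bullet> r - (a \<bullet> r)\<^sup>2 / na\<^sup>2"
      proof -
        define u where "u = (a \<bullet> r) / na\<^sup>2"
        have "(norm s)\<^sup>2 = r \<bullet> r - u * (r \<bullet> a) - u * (a \<bullet> r) + u * u * (a \<bullet> a)"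
          unfolding s_def u_def[symmetric] power2_norm_eq_inner
          by (simp add: inner_diff_left inner_diff_right algebra_simps)
        also have "\<dots> = r \<bullet> r - u * (a \<bullet> r)" unfolding aa u_def using na
          by (simp add: inner_commute power2_eq_square)
        finally show ?thesis unfolding u_def by (simp add: power2_eq_square)
      qed
      have tb: "t\<^sup>2 + (norm s)\<^sup>2 \<le> c\<^sup>2 + q\<^sup>2" unfolding ss cq t_def using r na
        by (simp add: power_divide power2_norm_eq_inner)
      have xr: "x \<bullet> r = t * \<xi> + xp \<bullet> s"
      proof -
        have "xp \<bullet> s = x \<bullet> s" unfolding xp_def using as by (simp add: inner_diff_left)
        also have "\<dots> = x \<bullet> r - (a \<bullet> r) * (x \<bullet> a) / na\<^sup>2" unfolding s_def
          by (simp add: inner_diff_right inner_commute)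
        finally show ?thesis unfolding t_def \<xi>_def using na by (simp add: power2_eq_square)
      qed
      have "\<bar>xp \<bullet> s\<bar> \<le> p * norm s" unfolding p_def by (rule Cauchy_Schwarz_ineq2)
      hence "xp \<bullet> s \<ge> - (p * norm s)" by linarith
      moreover have "t * \<xi> - p * norm s \<ge> c * \<xi> - p * q"
        using scal[OF _ q0 _ tc tb H] unfolding p_def by simp
      ultimately show "val \<le> z" unfolding z xr val_def by linarith
    qed
    thus ?thesis using val_eq unfolding S_def by simp
  qed
qed


theorem theorem2:
  fixes X :: "real^'p^'n" and y x :: "real^'n" and lam1 lam2 :: real
  assumes "y \<noteq> 0"
    and "0 < lam1" and "lam1 \<le> infnorm (transpose X *v y)"
    and "0 < lam2" and "lam2 < lam1"
    and "x \<noteq> 0"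
  defines "a \<equiv> (1/lam1) *\<^sub>R y - lasso_dual X y lam1"
    and "b \<equiv> (1/lam2) *\<^sub>R y - lasso_dual X y lam1"
  defines "xperp \<equiv> x - ((x \<bullet> a) / (norm a)\<^sup>2) *\<^sub>R a"
  defines "opt \<equiv> Inf {x \<bullet> r | r. a \<bullet> (r + b) \<le> 0 \<and> (norm r)\<^sup>2 \<le> (norm b)\<^sup>2}"
  shows "(b \<bullet> a / norm b \<le> x \<bullet> a / norm x \<longrightarrow> opt = - norm x * norm b)
       \<and> (\<not> (b \<bullet> a / norm b \<le> x \<bullet> a / norm x) \<longrightarrow>
            a \<noteq> 0 \<and>
            opt = - norm xperp * sqrt ((norm b)\<^sup>2 - (b \<bullet> a)\<^sup>2 / (norm a)\<^sup>2)
                  - (a \<bullet> b) * (x \<bullet> a) / (norm a)\<^sup>2)"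
proof (intro conjI impI)
  assume h: "b \<bullet> a / norm b \<le> x \<bullet> a / norm x"
  show "opt = - norm x * norm b" unfolding opt_def by (rule geo1[OF assms(6) h])
next
  assume h: "\<not> (b \<bullet> a / norm b \<le> x \<bullet> a / norm x)"
  note g = geo2[OF assms(6) h]
  show "a \<noteq> 0" using g by (rule conjunct1)
  show "opt = - norm xperp * sqrt ((norm b)\<^sup>2 - (b \<bullet> a)\<^sup>2 / (norm a)\<^sup>2)
                  - (a \<bullet> b) * (x \<bullet> a) / (norm a)\<^sup>2"
    unfolding opt_def xperp_def using g by (rule conjunct2)
qed

end
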